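(* Let $I=(N,A,V)$ be an instance with three agents $N=\{1,2,3\}$, binary valuations ($V_i(j,a)\in\{0,1\}$) satisfying the no-chore assumption ($V_i(i,a)\ge V_i(j,a)$ for all $i,j,a$). Let $\pi$ be an EF1 complete allocation of $I$ such that for every pair $i,j\in N$, if $\Delta_{ij}(\pi)=-1$ then $\Delta_{ji}(\pi)\ge 0$. Let $a\notin A$ be a new item (with binary, no-chore values $V_i(j,a)$) for which there is an agent $i\in N$ with $\Delta_{ij}(a)=0$ for all $j\in N$. Then the instance $I'=(N,A\cup\{a\},V)$ admits an EF1 complete allocation.
   Context: An allocation $\pi=(\pi_1,\pi_2,\pi_3)$ consists of pairwise disjoint bundles (complete if they cover the item set); $\pi(a)$ is the agent receiving $a$; $V_i(j,a)$ is agent $i$'s value when item $a$ goes to $j$; $V_i(\pi)=\sum_{a\text{ assigned in }\pi}V_i(\pi(a),a)$; $\pi^{i\leftrightarrow j}$ swaps bundles of $i$ and $j$. A complete allocation $\pi$ is EF1 if for all $i,j$ there exist $C$ with $|C|\le1$ and the allocation $\lambda$ with $\lambda_\ell=\pi_\ell\setminus C$ for all $\ell$ such that $V_i(\lambda)\ge V_i(\lambda^{i\leftrightarrow j})$. $\Delta_{ij}(a)=V_i(i,a)-V_i(j,a)$, $\Delta_{ij}(S)=\sum_{a\in S}\Delta_{ij}(a)$ for a set $S$, and $\Delta_{ij}(\pi)=\Delta_{ij}(\pi_i)-\Delta_{ij}(\pi_j)$. *)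

theory Defs
  imports Complex_Main
begin

text \<open>Agents are natural numbers from a set N; items have type 'a.
  A valuation V i j a is agent i's value when item a goes to agent j.
  An allocation is a function pi from agents to bundles (item sets).\<close>

definition is_allocation :: "nat set \<Rightarrow> 'a set \<Rightarrow> (nat \<Rightarrow> 'a set) \<Rightarrow> bool" where
  "is_allocation N A \<pi> \<longleftrightarrow>
     (\<forall>i\<in>N. \<pi> i \<subseteq> A) \<and> (\<forall>i\<in>N. \<forall>j\<in>N. i \<noteq> j \<longrightarrow> \<pi> i \<inter> \<pi> j = {})"

definition is_complete_allocation :: "nat set \<Rightarrow> 'a set \<Rightarrow> (nat \<Rightarrow> 'a set) \<Rightarrow> bool" where
  "is_complete_allocation N A \<pi> \<longleftrightarrow> is_allocation N A \<pi> \<and> (\<Union>i\<in>N. \<pi> i) = A"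

definition alloc_val :: "nat set \<Rightarrow> (nat \<Rightarrow> nat \<Rightarrow> 'a \<Rightarrow> real) \<Rightarrow> nat \<Rightarrow> (nat \<Rightarrow> 'a set) \<Rightarrow> real" where
  "alloc_val N V i \<pi> = (\<Sum>j\<in>N. \<Sum>a\<in>\<pi> j. V i j a)"

definition swap_bundles :: "(nat \<Rightarrow> 'a set) \<Rightarrow> nat \<Rightarrow> nat \<Rightarrow> (nat \<Rightarrow> 'a set)" where
  "swap_bundles \<pi> i j = \<pi>(i := \<pi> j, j := \<pi> i)"

definition EF1 :: "nat set \<Rightarrow> (nat \<Rightarrow> nat \<Rightarrow> 'a \<Rightarrow> real) \<Rightarrow> (nat \<Rightarrow> 'a set) \<Rightarrow> bool" where
  "EF1 N V \<pi> \<longleftrightarrow> (\<forall>i\<in>N. \<forall>j\<in>N. \<exists>C. finite C \<and> card C \<le> 1 \<and>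
     (let lam = (\<lambda>l. \<pi> l - C) in alloc_val N V i lam \<ge> alloc_val N V i (swap_bundles lam i j)))"

definition Delta_item :: "(nat \<Rightarrow> nat \<Rightarrow> 'a \<Rightarrow> real) \<Rightarrow> nat \<Rightarrow> nat \<Rightarrow> 'a \<Rightarrow> real" where
  "Delta_item V i j a = V i i a - V i j a"

definition Delta_set :: "(nat \<Rightarrow> nat \<Rightarrow> 'a \<Rightarrow> real) \<Rightarrow> nat \<Rightarrow> nat \<Rightarrow> 'a set \<Rightarrow> real" where
  "Delta_set V i j S = (\<Sum>a\<in>S. Delta_item V i j a)"

definition Delta_alloc :: "(nat \<Rightarrow> nat \<Rightarrow> 'a \<Rightarrow> real) \<Rightarrow> nat \<Rightarrow> nat \<Rightarrow> (nat \<Rightarrow> 'a set) \<Rightarrow> real" where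
  "Delta_alloc V i j \<pi> = Delta_set V i j (\<pi> i) - Delta_set V i j (\<pi> j)"

end

theory Submission imports Defs begin

lemma val_diff:
  assumes "i \<in> {1,2,3::nat}" "j \<in> {1,2,3::nat}"
  shows "alloc_val {1,2,3} V i lam - alloc_val {1,2,3} V i (swap_bundles lam i j) = Delta_alloc V i j lam"
  using assms
  by (auto simp: alloc_val_def swap_bundles_def Delta_alloc_def Delta_set_def Delta_item_def sum_subtractf)

lemma Dset_int:
  assumes "finite S" "\<forall>b\<in>S. Delta_item V i j b \<in> {0,1}"
  shows "Delta_set V i j S \<in> \<int>" "Delta_set V i j S \<ge> 0"
  using assms unfolding Delta_set_def
  by (auto intro!: Ints_sum sum_nonneg)

lemma Dset_remove:
  assumes "finite S" "\<forall>b\<in>S. Delta_item V i j b \<in> {0,1}"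
  shows "Delta_set V i j (S - C) \<le> Delta_set V i j S"
  using assms unfolding Delta_set_def
  by (intro sum_mono2) auto

lemma Dset_remove1:
  assumes "finite S" "\<forall>b\<in>S. Delta_item V i j b \<in> {0,1}"
  shows "Delta_set V i j (S - {c}) \<ge> Delta_set V i j S - 1"
proof (cases "c \<in> S")
  case True
  then have "Delta_set V i j S = Delta_item V i j c + Delta_set V i j (S - {c})"
    using assms unfolding Delta_set_def by (simp add: sum.remove)
  moreover have "Delta_item V i j c \<le> 1" using assms True by auto
  ultimately show ?thesis by linarith
qed simp

lemma ef1_imp:
  assumes "EF1 {1,2,3} V \<pi>" "i \<in> {1,2,3}" "j \<in> {1,2,3}" "finite B"
    "\<forall>b\<in>B. Delta_item V i j b \<in> {0,1}" "\<pi> i \<subseteq> B" "\<pi> j \<subseteq> B"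
  shows "Delta_alloc V i j \<pi> \<ge> -1"
proof -
  obtain C where C: "finite C" "card C \<le> 1"
    "alloc_val {1,2,3} V i (\<lambda>l. \<pi> l - C) \<ge> alloc_val {1,2,3} V i (swap_bundles (\<lambda>l. \<pi> l - C) i j)"
    using assms(1-3) unfolding EF1_def Let_def by blast
  have D: "Delta_alloc V i j (\<lambda>l. \<pi> l - C) \<ge> 0"
    using C(3) val_diff[OF assms(2,3), of V "\<lambda>l. \<pi> l - C"] by linarith
  have fi: "finite (\<pi> i)" "finite (\<pi> j)" using assms(4,6,7) finite_subset by auto
  have vi: "\<forall>b\<in>\<pi> i. Delta_item V i j b \<in> {0,1}" "\<forall>b\<in>\<pi> j. Delta_item V i j b \<in> {0,1}"
    using assms(5-7) by auto
  have "C = {} \<or> (\<exists>c. C = {c})" using C(1,2)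
    by (metis card_0_eq card_1_singletonE le_Suc_eq One_nat_def le_zero_eq)
  then show ?thesis
  proof
    assume "C = {}" then show ?thesis using D by simp
  next
    assume "\<exists>c. C = {c}"
    then obtain c where c: "C = {c}" by blast
    have "Delta_set V i j (\<pi> i - {c}) \<le> Delta_set V i j (\<pi> i)"
      using Dset_remove[OF fi(1) vi(1)] .
    moreover have "Delta_set V i j (\<pi> j - {c}) \<ge> Delta_set V i j (\<pi> j) - 1"
      using Dset_remove1[OF fi(2) vi(2)] .
    ultimately show ?thesis using D c unfolding Delta_alloc_def by simp
  qed
qed

lemma ef1_intro:
  assumes "finite B"
    "\<And>i j. i \<in> {1,2,3} \<Longrightarrow> j \<in> {1,2,3} \<Longrightarrow> \<forall>b\<in>B. Delta_item V i j b \<in> {0,1}"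
    "\<And>i. i \<in> {1,2,3} \<Longrightarrow> \<pi> i \<subseteq> B"
    "\<And>i j. i \<in> {1,2,3::nat} \<Longrightarrow> j \<in> {1,2,3} \<Longrightarrow> i \<noteq> j \<Longrightarrow> \<pi> i \<inter> \<pi> j = {}"
    "\<And>i j. i \<in> {1,2,3::nat} \<Longrightarrow> j \<in> {1,2,3} \<Longrightarrow> i \<noteq> j \<Longrightarrow> Delta_alloc V i j \<pi> \<ge> -1"
  shows "EF1 {1,2,3} V \<pi>"
  unfolding EF1_def Let_def
proof (intro ballI)
  fix i j assume ij: "i \<in> {1,2,3::nat}" "j \<in> {1,2,3::nat}"
  have fi: "finite (\<pi> i)" "finite (\<pi> j)" using assms(1,3) ij finite_subset by metis+
  have vi: "\<forall>b\<in>\<pi> i. Delta_item V i j b \<in> {0,1}" "\<forall>b\<in>\<pi> j. Delta_item V i j b \<in> {0,1}"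
    using assms(2)[OF ij] assms(3) ij by blast+
  show "\<exists>C. finite C \<and> card C \<le> 1 \<and>
     alloc_val {1,2,3} V i (swap_bundles (\<lambda>l. \<pi> l - C) i j) \<le> alloc_val {1,2,3} V i (\<lambda>l. \<pi> l - C)"
  proof (cases "Delta_alloc V i j \<pi> \<ge> 0")
    case True
    then show ?thesis using val_diff[OF ij, of V \<pi>]
      by (intro exI[of _ "{}"]) simp
  next
    case False
    then have ne: "i \<noteq> j" unfolding Delta_alloc_def by auto
    have "Delta_set V i j (\<pi> j) > 0" using False Dset_int(2)[OF fi(1) vi(1)]
      unfolding Delta_alloc_def by linarith
    then obtain c where c: "c \<in> \<pi> j" "Delta_item V i j c \<noteq> 0"
      unfolding Delta_set_def by (metis less_irrefl sum.neutral)
    then have c1: "Delta_item V i j c = 1" using vi(2) by auto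
    have cni: "c \<notin> \<pi> i" using assms(4)[OF ij ne] c by auto
    have e1: "\<pi> i - {c} = \<pi> i" using cni by auto
    have e2: "Delta_set V i j (\<pi> j) = Delta_item V i j c + Delta_set V i j (\<pi> j - {c})"
      using fi c unfolding Delta_set_def by (simp add: sum.remove)
    have "Delta_alloc V i j (\<lambda>l. \<pi> l - {c}) \<ge> 0"
      using assms(5)[OF ij ne] e1 e2 c1 unfolding Delta_alloc_def by simp
    then show ?thesis using val_diff[OF ij, of V "\<lambda>l. \<pi> l - {c}"]
      by (intro exI[of _ "{c}"]) simp
  qed
qed

theorem lemma6:
  fixes A :: "'a set" and V :: "nat \<Rightarrow> nat \<Rightarrow> 'a \<Rightarrow> real"
    and \<pi> :: "nat \<Rightarrow> 'a set" and a :: 'a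
  assumes finA: "finite A"
    and binary: "\<forall>i\<in>{1,2,3}. \<forall>j\<in>{1,2,3}. \<forall>b\<in>insert a A. V i j b \<in> {0, 1}"
    and nochore: "\<forall>i\<in>{1,2,3}. \<forall>j\<in>{1,2,3}. \<forall>b\<in>insert a A. V i i b \<ge> V i j b"
    and compl: "is_complete_allocation {1,2,3} A \<pi>"
    and ef1: "EF1 {1,2,3} V \<pi>"
    and cond: "\<forall>i\<in>{1,2,3}. \<forall>j\<in>{1,2,3}.
                 Delta_alloc V i j \<pi> = -1 \<longrightarrow> Delta_alloc V j i \<pi> \<ge> 0"
    and new: "a \<notin> A"
    and zero: "\<exists>i\<in>{1,2,3}. \<forall>j\<in>{1,2,3}. Delta_item V i j a = 0"
  shows "\<exists>\<pi>'. is_complete_allocation {1,2,3} (insert a A) \<pi>' \<and> EF1 {1,2,3} V \<pi>'"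
proof -
  define N :: "nat set" where "N = {1,2,3}"
  have Dv: "\<forall>b\<in>insert a A. Delta_item V i j b \<in> {0,1}" if "i \<in> N" "j \<in> N" for i j
  proof
    fix b assume b: "b \<in> insert a A"
    have "V i i b \<in> {0,1}" "V i j b \<in> {0,1}" "V i i b \<ge> V i j b"
      using binary nochore that b unfolding N_def by blast+
    then show "Delta_item V i j b \<in> {0,1}" unfolding Delta_item_def by auto
  qed
  have sub: "\<pi> i \<subseteq> A" if "i \<in> N" for i
    using compl that unfolding N_def is_complete_allocation_def is_allocation_def by blast
  have disj: "\<pi> i \<inter> \<pi> j = {}" if "i \<in> N" "j \<in> N" "i \<noteq> j" for i j
    using compl that unfolding N_def is_complete_allocation_def is_allocation_def by blast
  have cov: "(\<Union>i\<in>N. \<pi> i) = A"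
    using compl unfolding N_def is_complete_allocation_def by blast
  have fin: "finite (\<pi> i)" if "i \<in> N" for i using sub[OF that] finA finite_subset by blast
  have ge: "Delta_alloc V i j \<pi> \<ge> -1" if "i \<in> N" "j \<in> N" for i j
    by (rule ef1_imp[OF ef1 that[unfolded N_def] finite_insert[THEN iffD2, OF finA, of a]
          Dv[OF that]]) (use sub that in auto)
  have int: "Delta_alloc V i j \<pi> \<in> \<int>" if "i \<in> N" "j \<in> N" for i j
    unfolding Delta_alloc_def using Dset_int(1)[OF fin, of _ V i j] Dv[OF that] sub that
    by (metis Ints_diff subset_iff subset_insertI)
  define bad where "bad t k \<longleftrightarrow> k \<in> N \<and> k \<noteq> t \<and> Delta_alloc V k t \<pi> = -1 \<and> Delta_item V k t a = 1" for t k
  obtain i0 where i0: "i0 \<in> N" "\<forall>j\<in>N. Delta_item V i0 j a = 0" using zero unfolding N_def by blast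
  have "\<exists>t\<in>N. \<forall>k. \<not> bad t k"
  proof (rule ccontr)
    assume neg: "\<not> (\<exists>t\<in>N. \<forall>k. \<not> bad t k)"
    then obtain k where k: "bad i0 k" using i0 by blast
    have kN: "k \<in> N" using k bad_def by auto
    then obtain m where m: "bad k m" using neg by blast
    have mN: "m \<in> N" using m bad_def by auto
    then obtain p where p: "bad m p" using neg by blast
    have c1: "Delta_alloc V i0 k \<pi> \<ge> 0" using cond k i0(1) kN unfolding bad_def N_def by blast
    have "m \<noteq> i0" using m c1 unfolding bad_def by auto
    moreover have "p \<noteq> i0" using p i0 mN unfolding bad_def by auto
    moreover have "p \<noteq> m" "m \<noteq> k" "k \<noteq> i0" "p \<in> N" using p m k unfolding bad_def by auto
    ultimately have "p = k" using i0(1) kN mN unfolding N_def by auto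
    then have "Delta_alloc V k m \<pi> = -1" "Delta_alloc V m k \<pi> = -1" using p m unfolding bad_def by auto
    then show False using cond kN mN unfolding N_def by force
  qed
  then obtain t where t: "t \<in> N" "\<And>k. \<not> bad t k" by blast
  define \<pi>' where "\<pi>' = \<pi>(t := insert a (\<pi> t))"
  have sub': "\<pi>' i \<subseteq> insert a A" if "i \<in> N" for i
    using sub[OF that] unfolding \<pi>'_def by (auto simp: sub t)
  have anot: "a \<notin> \<pi> i" if "i \<in> N" for i using sub[OF that] new by auto
  have disj': "\<pi>' i \<inter> \<pi>' j = {}" if "i \<in> N" "j \<in> N" "i \<noteq> j" for i j
    using disj[OF that] anot that unfolding \<pi>'_def by auto
  have cov': "(\<Union>i\<in>N. \<pi>' i) = insert a A"
    using cov t(1) unfolding \<pi>'_def by auto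
  have ins: "Delta_set V k l (insert a (\<pi> t)) = Delta_item V k l a + Delta_set V k l (\<pi> t)" for k l
    unfolding Delta_set_def using fin[OF t(1)] anot[OF t(1)] by simp
  have ge': "Delta_alloc V k l \<pi>' \<ge> -1" if "k \<in> N" "l \<in> N" "k \<noteq> l" for k l
  proof -
    consider "t = k" | "t = l" | "t \<noteq> k" "t \<noteq> l" by blast
    then show ?thesis
    proof cases
      case 1
      have "Delta_item V k l a \<ge> 0" using Dv[OF that(1,2)] by auto
      then show ?thesis using ge[OF that(1,2)] 1 that(3) ins
        unfolding \<pi>'_def Delta_alloc_def by auto
    next
      case 2
      have e: "Delta_alloc V k l \<pi>' = Delta_alloc V k l \<pi> - Delta_item V k l a"
        using 2 that(3) ins unfolding \<pi>'_def Delta_alloc_def by auto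
      have "Delta_item V k l a \<in> {0,1}" using Dv[OF that(1,2)] by auto
      then show ?thesis
      proof
        assume "Delta_item V k l a = 0" then show ?thesis using e ge[OF that(1,2)] by simp
      next
        assume d1: "Delta_item V k l a \<in> {1}"
        then have "Delta_alloc V k l \<pi> \<noteq> -1" using t(2)[of k] that 2 unfolding bad_def by auto
        moreover have "Delta_alloc V k l \<pi> \<ge> -1" "Delta_alloc V k l \<pi> \<in> \<int>"
          using ge int that by auto
        ultimately have "Delta_alloc V k l \<pi> \<ge> 0"
        proof -
          obtain z where z: "Delta_alloc V k l \<pi> = of_int z"
            using \<open>Delta_alloc V k l \<pi> \<in> \<int>\<close> Ints_cases by metis
          have "z \<ge> -1" "z \<noteq> -1" using z \<open>Delta_alloc V k l \<pi> \<ge> -1\<close> \<open>Delta_alloc V k l \<pi> \<noteq> -1\<close> by linarith+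
          then have "z \<ge> 0" by linarith
          then show ?thesis using z by simp
        qed
        then show ?thesis using e d1 by simp
      qed
    next
      case 3
      then show ?thesis using ge[OF that(1,2)] unfolding \<pi>'_def Delta_alloc_def by simp
    qed
  qed
  have "is_complete_allocation {1,2,3} (insert a A) \<pi>'"
    unfolding is_complete_allocation_def is_allocation_def
    using sub' disj' cov' unfolding N_def by blast
  moreover have "EF1 {1,2,3} V \<pi>'"
    by (rule ef1_intro[of "insert a A"])
       (use finA Dv sub' disj' ge' in \<open>auto simp: N_def\<close>)
  ultimately show ?thesis by blast
qed

end
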